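(* Let $\mathbf{X}\sim\mathcal{N}(\mathbf{0}_n,\mathbf{I}_n)$. Then $$\lim_{n\to\infty}\frac{\mathsf{Var}(\vec{\mathbf{X}})}{n}=0.$$
   Context: $\vec{\mathbf{X}}$ is the vector $\mathbf{X}$ with entries sorted in ascending order, and $\mathsf{Var}(\vec{\mathbf{X}})=\mathbb{E}\left[\|\vec{\mathbf{X}}-\mathbb{E}[\vec{\mathbf{X}}]\|^2\right]$ with $\|\cdot\|$ the Euclidean norm. *)

theory Defs
  imports "HOL-Probability.Probability"
begin

text \<open>Law of X ~ N(0_n, I_n): product of n independent standard normals,
  as a measure on functions indexed by {..<n}.\<close>
definition gauss_vec :: "nat \<Rightarrow> (nat \<Rightarrow> real) measure" where
  "gauss_vec n = PiM {..<n} (\<lambda>_. density lborel std_normal_density)"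

definition sorted_entry :: "nat \<Rightarrow> (nat \<Rightarrow> real) \<Rightarrow> nat \<Rightarrow> real" where
  "sorted_entry n x k = sort (map x [0..<n]) ! k"

definition var_sorted :: "nat \<Rightarrow> real" where
  "var_sorted n =
     (\<integral>x. (\<Sum>k<n. (sorted_entry n x k - (\<integral>y. sorted_entry n y k \<partial>gauss_vec n))\<^sup>2) \<partial>gauss_vec n)"

end

theory Submission
  imports Defs "HOL-Real_Asymp.Real_Asymp"
begin
lemma sorted_nth_le_iff:
  fixes L :: "real list"
  assumes "sorted L" "k < length L"
  shows "(L ! k \<le> t) = (k < length (filter (\<lambda>y. y \<le> t) L))"
  using assms
proof (induction L arbitrary: k)
  case Nil then show ?case by simp
next
  case (Cons a L)
  show ?case
  proof (cases "a \<le> t")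
    case True
    then show ?thesis using Cons by (cases k) auto
  next
    case False
    have "\<forall>y\<in>set L. t < y" using Cons.prems(1) False by auto
    then have "filter (\<lambda>y. y \<le> t) L = []" by (auto simp: filter_empty_conv)
    moreover have "(a # L) ! k \<ge> a" using Cons.prems
      by (cases k) auto
    ultimately show ?thesis using False by auto
  qed
qed

definition cnt :: "nat \<Rightarrow> real \<Rightarrow> (nat \<Rightarrow> real) \<Rightarrow> nat" where
  "cnt n t x = length (filter (\<lambda>y. y \<le> t) (map x [0..<n]))"

lemma cnt_real: "real (cnt n t x) = (\<Sum>i<n. if x i \<le> t then 1 else 0)"
  unfolding cnt_def by (induction n) auto

lemma cnt_le: "cnt n t x \<le> n"
  unfolding cnt_def by (metis length_filter_le length_map length_upt minus_nat.diff_0)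

lemma sorted_entry_le_iff:
  assumes "k < n"
  shows "(sorted_entry n x k \<le> t) = (k < cnt n t x)"
proof -
  have "length (filter (\<lambda>y. y \<le> t) (sort (map x [0..<n]))) = cnt n t x"
    unfolding cnt_def by (metis filter_sort length_sort)
  then show ?thesis unfolding sorted_entry_def
    using sorted_nth_le_iff[of "sort (map x [0..<n])" k t] assms by simp
qed

lemma sorted_entry_mem:
  assumes "k < n" shows "sorted_entry n x k \<in> x ` {..<n}"
proof -
  have "sorted_entry n x k \<in> set (sort (map x [0..<n]))"
    unfolding sorted_entry_def using assms by (intro nth_mem) simp
  then show ?thesis by auto
qed

lemma sum_sorted_entry:
  "(\<Sum>k<n. g (sorted_entry n x k)) = (\<Sum>i<n. g (x i))"
proof -
  have "(\<Sum>k<n. g (sorted_entry n x k)) = sum_list (map g (sort (map x [0..<n])))"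
    unfolding sorted_entry_def sum_list_sum_nth by (simp add: lessThan_atLeast0)
  also have "\<dots> = sum_list (map g (map x [0..<n]))"
    by (metis mset_map mset_sort sum_mset_sum_list)
  also have "\<dots> = (\<Sum>i<n. g (x i))"
    by (simp add: sum_list_sum_nth lessThan_atLeast0)
  finally show ?thesis .
qed

lemma sum_ind_diff:
  fixes A B n :: nat
  assumes "A \<le> n" "B \<le> n"
  shows "(\<Sum>k<n. \<bar>(if k < A then 1 else 0) - (if k < B then 1 else (0::real))\<bar>) = \<bar>real A - real B\<bar>"
proof -
  have s: "(\<Sum>k<n. if k < C then 1 else (0::real)) = real C" if "C \<le> n" for C
  proof -
    have "(\<Sum>k<n. if k < C then 1 else (0::real)) = card ({..<n} \<inter> {k. k < C})"
      by (simp add: sum.If_cases)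
    also have "{..<n} \<inter> {k. k < C} = {..<C}" using that by auto
    finally show ?thesis by simp
  qed
  show ?thesis
  proof (cases "A \<le> B")
    case True
    have "(\<Sum>k<n. \<bar>(if k < A then 1 else 0) - (if k < B then 1 else (0::real))\<bar>)
        = (\<Sum>k<n. (if k < B then 1 else 0) - (if k < A then 1 else (0::real)))"
      by (intro sum.cong) (use True in auto)
    also have "\<dots> = real B - real A" using s assms by (simp add: sum_subtractf)
    finally show ?thesis using True by simp
  next
    case False
    have "(\<Sum>k<n. \<bar>(if k < A then 1 else 0) - (if k < B then 1 else (0::real))\<bar>)
        = (\<Sum>k<n. (if k < A then 1 else 0) - (if k < B then 1 else (0::real)))"
      by (intro sum.cong) (use False in auto)
    also have "\<dots> = real A - real B" using s assms by (simp add: sum_subtractf)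
    finally show ?thesis using False by simp
  qed
qed

lemma grid_aux:
  fixes M h a b :: real and J :: nat
  assumes M: "M > 0" and J: "J > 0" and h: "h = 2 * M / J"
    and ab: "-M \<le> a" "a \<le> b" "b \<le> M"
  shows "b - a \<le> h * (1 + (\<Sum>j<J. \<bar>(if a \<le> -M + j*h then 1 else 0) - (if b \<le> -M + j*h then 1 else (0::real))\<bar>))"
proof -
  have hpos: "h > 0" using M J h by simp
  define j1 where "j1 = nat \<lceil>(a+M)/h\<rceil>"
  define j2 where "j2 = nat \<lceil>(b+M)/h\<rceil>"
  have JJ: "real J = 2*M/h" using h M J by simp
  have "(b+M)/h \<le> 2*M/h" using ab hpos by (simp add: divide_right_mono)
  then have bJ: "(b+M)/h \<le> real J" using JJ by simp
  then have j2J: "j2 \<le> J" unfolding j2_def using bJ by simp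
  have nn1: "(a+M)/h \<ge> 0" using ab hpos by simp
  have nn2: "(b+M)/h \<ge> 0" using ab hpos by simp
  have e1: "real j1 = of_int \<lceil>(a+M)/h\<rceil>" unfolding j1_def using nn1 by simp
  have e2: "real j2 = of_int \<lceil>(b+M)/h\<rceil>" unfolding j2_def using nn2 by simp
  have r1: "real j1 \<le> (a+M)/h + 1" using e1 of_int_ceiling_le_add_one by simp
  have r2: "real j2 \<ge> (b+M)/h" using e2 le_of_int_ceiling by simp
  have inner: "\<bar>(if a \<le> -M + j*h then 1 else 0) - (if b \<le> -M + j*h then 1 else (0::real))\<bar> = 1"
    if "j \<in> {j1..<j2}" for j
  proof -
    have "j1 \<le> j" "j < j2" using that by auto
    have A1: "(a+M)/h \<le> real j" using \<open>j1 \<le> j\<close> e1 le_of_int_ceiling[of "(a+M)/h"]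
      by (metis of_nat_mono order_trans)
    have "int j < \<lceil>(b+M)/h\<rceil>" using \<open>j < j2\<close> unfolding j2_def
      using zless_nat_eq_int_zless by blast
    then have A2: "real j < (b+M)/h" by (simp add: less_ceiling_iff)
    from A1 A2 have "(a+M)/h \<le> real j" "real j < (b+M)/h" by auto
    then have "a + M \<le> real j * h" "real j * h < b + M" using hpos by (simp_all add: field_simps)
    then show ?thesis by auto
  qed
  have "real (j2 - j1) \<le> (\<Sum>j\<in>{j1..<j2}. \<bar>(if a \<le> -M + j*h then 1 else 0) - (if b \<le> -M + j*h then 1 else (0::real))\<bar>)"
    using inner by simp
  also have "\<dots> \<le> (\<Sum>j<J. \<bar>(if a \<le> -M + j*h then 1 else 0) - (if b \<le> -M + j*h then 1 else (0::real))\<bar>)"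
    by (rule sum_mono2) (use j2J in auto)
  finally have S: "real (j2 - j1) \<le> (\<Sum>j<J. \<bar>(if a \<le> -M + j*h then 1 else 0) - (if b \<le> -M + j*h then 1 else (0::real))\<bar>)" .
  have "real j2 - real j1 \<le> real (j2 - j1)" by linarith
  then have "(b+M)/h - (a+M)/h - 1 \<le> (\<Sum>j<J. \<bar>(if a \<le> -M + j*h then 1 else 0) - (if b \<le> -M + j*h then 1 else (0::real))\<bar>)"
    using S r1 r2 by linarith
  then have "(b - a)/h \<le> 1 + (\<Sum>j<J. \<bar>(if a \<le> -M + j*h then 1 else 0) - (if b \<le> -M + j*h then 1 else (0::real))\<bar>)"
    using diff_divide_distrib[of "b+M" "a+M" h] by simp
  then show ?thesis using hpos by (simp add: field_simps)
qed

lemma grid: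
  fixes M h a b :: real and J :: nat
  assumes M: "M > 0" and J: "J > 0" and h: "h = 2 * M / J"
    and ab: "-M \<le> a" "a \<le> M" "-M \<le> b" "b \<le> M"
  shows "\<bar>a - b\<bar> \<le> h * (1 + (\<Sum>j<J. \<bar>(if a \<le> -M + j*h then 1 else 0) - (if b \<le> -M + j*h then 1 else (0::real))\<bar>))"
proof (cases "a \<le> b")
  case True
  then show ?thesis using grid_aux[OF M J h, of a b] ab by simp
next
  case False
  have "a - b \<le> h * (1 + (\<Sum>j<J. \<bar>(if b \<le> -M + j*h then 1 else 0) - (if a \<le> -M + j*h then 1 else (0::real))\<bar>))"
    using grid_aux[OF M J h, of b a] ab False by simp
  also have "(\<Sum>j<J. \<bar>(if b \<le> -M + j*h then 1 else 0) - (if a \<le> -M + j*h then 1 else (0::real))\<bar>)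
     = (\<Sum>j<J. \<bar>(if a \<le> -M + j*h then 1 else 0) - (if b \<le> -M + j*h then 1 else (0::real))\<bar>)"
    by (simp add: abs_minus_commute)
  finally show ?thesis using False by simp
qed

lemma exists_c:
  fixes M h :: real and J :: nat and C :: "nat \<Rightarrow> nat"
  assumes h: "h > 0" and Jh: "real J * h = 2 * M"
    and mono: "\<And>j1 j2. j1 \<le> j2 \<Longrightarrow> j2 < J \<Longrightarrow> C j1 \<le> C j2"
  shows "\<exists>c. (\<forall>k. -M \<le> c k \<and> c k \<le> M) \<and> (\<forall>j<J. \<forall>k. (c k \<le> -M + real j * h) = (k < C j))"
proof -
  define c where "c k = (if \<exists>j<J. k < C j then -M + real (LEAST j. j<J \<and> k < C j) * h else M)" for k
  have bnd: "-M \<le> c k \<and> c k \<le> M" for k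
  proof (cases "\<exists>j<J. k < C j")
    case True
    define j0 where "j0 = (LEAST j. j<J \<and> k < C j)"
    have "j0 < J" unfolding j0_def using True by (metis (mono_tags, lifting) LeastI_ex)
    then have "real j0 * h \<le> real J * h" using h by simp
    moreover have "0 \<le> real j0 * h" using h by simp
    ultimately show ?thesis using True Jh unfolding c_def j0_def[symmetric] by simp
  next
    case False
    have "real J * h \<ge> 0" using h by simp
    then have "M \<ge> 0" using Jh by simp
    have "c k = M" using False unfolding c_def by (simp only: if_False)
    then show ?thesis using \<open>M \<ge> 0\<close> by simp
  qed
  have iff: "(c k \<le> -M + real j * h) = (k < C j)" if "j < J" for j k
  proof
    assume "k < C j"
    then have ex: "\<exists>j<J. k < C j" using that by blast
    have "(LEAST j. j<J \<and> k < C j) \<le> j" using \<open>k < C j\<close> that by (intro Least_le) simp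
    then have "real (LEAST j. j<J \<and> k < C j) * h \<le> real j * h" using h by simp
    then show "c k \<le> -M + real j * h" using ex unfolding c_def by simp
  next
    assume a: "c k \<le> -M + real j * h"
    show "k < C j"
    proof (cases "\<exists>j<J. k < C j")
      case True
      define j0 where "j0 = (LEAST j. j<J \<and> k < C j)"
      have j0: "j0 < J \<and> k < C j0" unfolding j0_def using True by (metis (mono_tags, lifting) LeastI_ex)
      have "real j0 * h \<le> real j * h" using a True unfolding c_def j0_def[symmetric] by simp
      then have "j0 \<le> j" using h by simp
      then show ?thesis using mono[of j0 j] j0 that by simp
    next
      case False
      have "real j * h < real J * h" using that h by simp
      then show ?thesis using a False Jh unfolding c_def by simp
    qed
  qed
  show ?thesis using bnd iff by blast
qed

definition NN :: "real measure" where "NN = density lborel std_normal_density"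

lemma prob_NN: "prob_space NN"
  unfolding NN_def by (rule prob_space_normal_density) simp

lemma space_NN[simp]: "space NN = UNIV" by (simp add: NN_def)
lemma sets_NN[simp]: "sets NN = sets borel" by (simp add: NN_def)

lemma pps: "product_prob_space (\<lambda>_::nat. NN)"
  unfolding product_prob_space_def product_sigma_finite_def product_prob_space_axioms_def
  using prob_NN prob_space_imp_sigma_finite by auto

lemma gv: "gauss_vec n = PiM {..<n} (\<lambda>_. NN)"
  by (simp add: gauss_vec_def NN_def)

lemma prob_gv: "prob_space (gauss_vec n)"
  unfolding gv by (rule prob_space_PiM) (simp add: prob_NN)

lemma integrable_NN_iff:
  assumes [measurable]: "f \<in> borel_measurable borel"
  shows "integrable NN f \<longleftrightarrow> integrable lborel (\<lambda>x. std_normal_density x * f x)"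
  unfolding NN_def by (subst integrable_density) (auto simp: normal_density_nonneg)

lemma integral_NN:
  assumes [measurable]: "f \<in> borel_measurable borel"
  shows "integral\<^sup>L NN f = integral\<^sup>L lborel (\<lambda>x. std_normal_density x * f x)"
  unfolding NN_def by (subst integral_density) (auto simp: normal_density_nonneg)

lemma int_NN_pow: "integrable NN (\<lambda>x. x ^ k)"
  by (subst integrable_NN_iff) (auto intro: integrable_std_normal_moment)

lemma int_NN_abs: "integrable NN (\<lambda>x. \<bar>x\<bar>)"
  using integrable_std_normal_moment_abs[of 1] by (subst integrable_NN_iff) auto

lemma int_NN_4: "integral\<^sup>L NN (\<lambda>x. x ^ 4) = 3"
proof -
  have "integral\<^sup>L NN (\<lambda>x. x ^ 4) = integral\<^sup>L lborel (\<lambda>x. std_normal_density x * x ^ (2*2))"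
    by (subst integral_NN) auto
  also have "\<dots> = 3" by (subst integral_std_normal_moment_even) (simp add: fact_numeral)
  finally show ?thesis .
qed

lemma int_coords:
  fixes g :: "nat \<Rightarrow> real \<Rightarrow> real"
  assumes J: "J \<subseteq> {..<n}" and g: "\<And>l. l \<in> J \<Longrightarrow> integrable NN (g l)"
  shows "integrable (gauss_vec n) (\<lambda>x. \<Prod>l\<in>J. g l (x l))"
    "integral\<^sup>L (gauss_vec n) (\<lambda>x. \<Prod>l\<in>J. g l (x l)) = (\<Prod>l\<in>J. integral\<^sup>L NN (g l))"
proof -
  interpret product_prob_space "\<lambda>_. NN" "{..<n}" by (rule pps)
  define f where "f l = (if l \<in> J then g l else (\<lambda>_. 1))" for l
  have fi: "integrable NN (f l)" for l
    unfolding f_def using g by auto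
  have e: "(\<Prod>l\<in>{..<n}. f l (x l)) = (\<Prod>l\<in>J. g l (x l))" for x
  proof -
    have "(\<Prod>l\<in>{..<n}. f l (x l)) = (\<Prod>l\<in>J. f l (x l))"
      by (rule prod.mono_neutral_right) (use J in \<open>auto simp: f_def\<close>)
    also have "\<dots> = (\<Prod>l\<in>J. g l (x l))" by (simp add: f_def)
    finally show ?thesis .
  qed
  have p1: "measure NN UNIV = 1" using prob_space.prob_space[OF prob_NN] by simp
  have e2: "(\<Prod>l\<in>{..<n}. integral\<^sup>L NN (f l)) = (\<Prod>l\<in>J. integral\<^sup>L NN (g l))"
  proof -
    have "(\<Prod>l\<in>{..<n}. integral\<^sup>L NN (f l)) = (\<Prod>l\<in>J. integral\<^sup>L NN (f l))"
      by (rule prod.mono_neutral_right) (use J in \<open>auto simp: f_def p1\<close>)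
    also have "\<dots> = (\<Prod>l\<in>J. integral\<^sup>L NN (g l))" by (simp add: f_def)
    finally show ?thesis .
  qed
  show "integrable (gauss_vec n) (\<lambda>x. \<Prod>l\<in>J. g l (x l))"
    using product_integrable_prod[of "{..<n}" f] fi unfolding gv e by simp
  show "integral\<^sup>L (gauss_vec n) (\<lambda>x. \<Prod>l\<in>J. g l (x l)) = (\<Prod>l\<in>J. integral\<^sup>L NN (g l))"
    using product_integral_prod[of "{..<n}" f] fi unfolding gv e e2 by simp
qed

lemma int_coord1:
  fixes g :: "real \<Rightarrow> real"
  assumes "i < n" "integrable NN g"
  shows "integrable (gauss_vec n) (\<lambda>x. g (x i))" "integral\<^sup>L (gauss_vec n) (\<lambda>x. g (x i)) = integral\<^sup>L NN g"
  using int_coords[of "{i}" n "\<lambda>_. g"] assms by auto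

lemma int_coord2:
  fixes g g' :: "real \<Rightarrow> real"
  assumes "i < n" "i' < n" "i \<noteq> i'" "integrable NN g" "integrable NN g'"
  shows "integral\<^sup>L (gauss_vec n) (\<lambda>x. g (x i) * g' (x i')) = integral\<^sup>L NN g * integral\<^sup>L NN g'"
  using int_coords(2)[of "{i,i'}" n "\<lambda>l. if l = i then g else g'"] assms by auto

lemma meas_coord: assumes "i < n" shows "(\<lambda>x. x i) \<in> borel_measurable (gauss_vec n)"
proof -
  have "(\<lambda>x. x i) \<in> measurable (PiM {..<n} (\<lambda>_. NN)) NN"
    by (rule measurable_component_singleton) (use assms in simp)
  moreover have "measurable (PiM {..<n} (\<lambda>_. NN)) NN = borel_measurable (PiM {..<n} (\<lambda>_. NN))"
    by (rule measurable_cong_sets) auto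
  ultimately show ?thesis unfolding gv by simp
qed

lemma meas_cnt[measurable]: "(\<lambda>x. real (cnt n t x)) \<in> borel_measurable (gauss_vec n)"
  unfolding cnt_real
proof (intro borel_measurable_sum)
  fix i assume "i \<in> {..<n}"
  then have [measurable]: "(\<lambda>x. x i) \<in> borel_measurable (gauss_vec n)" by (intro meas_coord) simp
  show "(\<lambda>x. if x i \<le> t then 1 else 0 :: real) \<in> borel_measurable (gauss_vec n)" by measurable
qed

lemma meas_S: assumes "k < n" shows "(\<lambda>x. sorted_entry n x k) \<in> borel_measurable (gauss_vec n)"
proof (subst borel_measurable_iff_le, intro allI)
  fix a
  have "{w \<in> space (gauss_vec n). sorted_entry n w k \<le> a} = {w \<in> space (gauss_vec n). real k < real (cnt n a w)}"
    using sorted_entry_le_iff[OF assms] by auto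
  also have "\<dots> \<in> sets (gauss_vec n)" by measurable
  finally show "{w \<in> space (gauss_vec n). sorted_entry n w k \<le> a} \<in> sets (gauss_vec n)" .
qed

lemma int_sum_abs: "integrable (gauss_vec n) (\<lambda>x. \<Sum>i<n. \<bar>x i\<bar>)"
  by (intro Bochner_Integration.integrable_sum int_coord1 int_NN_abs) auto

lemma int_sum_pow: "integrable (gauss_vec n) (\<lambda>x. \<Sum>i<n. (x i) ^ p)"
  by (intro Bochner_Integration.integrable_sum int_coord1 int_NN_pow) auto

lemma int_S: assumes "k < n" shows "integrable (gauss_vec n) (\<lambda>x. sorted_entry n x k)"
proof (rule Bochner_Integration.integrable_bound[OF int_sum_abs meas_S[OF assms]], intro AE_I2)
  fix x
  obtain i where i: "i < n" "sorted_entry n x k = x i" using sorted_entry_mem[OF assms, of x] by auto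
  have "\<bar>x i\<bar> \<le> (\<Sum>i<n. \<bar>x i\<bar>)" by (rule member_le_sum) (use i in auto)
  then show "norm (sorted_entry n x k) \<le> norm (\<Sum>i<n. \<bar>x i\<bar>)" using i by simp
qed

lemma int_S2: assumes "k < n" shows "integrable (gauss_vec n) (\<lambda>x. (sorted_entry n x k)^2)"
proof (rule Bochner_Integration.integrable_bound[OF int_sum_pow[of n 2]], use meas_S[OF assms] in measurable, intro AE_I2)
  fix x
  obtain i where i: "i < n" "sorted_entry n x k = x i" using sorted_entry_mem[OF assms, of x] by auto
  have "(x i)^2 \<le> (\<Sum>i<n. (x i)^2)" by (rule member_le_sum) (use i in auto)
  then show "norm ((sorted_entry n x k)^2) \<le> norm (\<Sum>i<n. (x i)^2)" using i by simp
qed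

lemma sq_expand:
  fixes f :: "'a \<Rightarrow> real"
  assumes P: "prob_space M" and f: "integrable M f" and f2: "integrable M (\<lambda>x. (f x)^2)"
  shows "integrable M (\<lambda>x. (f x - d)^2)"
    "integral\<^sup>L M (\<lambda>x. (f x - d)^2) = integral\<^sup>L M (\<lambda>x. (f x)^2) - 2 * d * integral\<^sup>L M f + d^2"
proof -
  interpret prob_space M by (rule P)
  have e: "(\<lambda>x. (f x - d)^2) = (\<lambda>x. ((f x)^2 - 2 * d * f x) + d^2)"
    by (auto simp: power2_eq_square algebra_simps)
  show "integrable M (\<lambda>x. (f x - d)^2)" unfolding e using f f2 by auto
  show "integral\<^sup>L M (\<lambda>x. (f x - d)^2) = integral\<^sup>L M (\<lambda>x. (f x)^2) - 2 * d * integral\<^sup>L M f + d^2"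
    unfolding e using f f2 by (simp add: integral_add integral_diff prob_space)
qed

lemma var_min:
  fixes f :: "'a \<Rightarrow> real"
  assumes P: "prob_space M" and f: "integrable M f" and f2: "integrable M (\<lambda>x. (f x)^2)"
  shows "integral\<^sup>L M (\<lambda>x. (f x - integral\<^sup>L M f)^2) \<le> integral\<^sup>L M (\<lambda>x. (f x - c)^2)"
proof -
  define m where "m = integral\<^sup>L M f"
  have A: "integral\<^sup>L M (\<lambda>x. (f x - m)^2) = integral\<^sup>L M (\<lambda>x. (f x)^2) - 2 * m * m + m^2"
    unfolding m_def by (rule sq_expand(2)[OF P f f2])
  have B: "integral\<^sup>L M (\<lambda>x. (f x - c)^2) = integral\<^sup>L M (\<lambda>x. (f x)^2) - 2 * c * m + c^2"
    unfolding m_def by (rule sq_expand(2)[OF P f f2])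
  have C: "0 \<le> (m - c)^2" by simp
  have D: "(m - c)^2 = m^2 - 2 * c * m + c^2" by (simp add: power2_eq_square algebra_simps)
  have E: "2 * m * m = 2 * m^2" by (simp add: power2_eq_square)
  show ?thesis unfolding m_def[symmetric] A B using C D E by linarith
qed

lemma var_le:
  "var_sorted n \<le> integral\<^sup>L (gauss_vec n) (\<lambda>x. \<Sum>k<n. (sorted_entry n x k - c k)^2)"
proof -
  let ?P = "gauss_vec n"
  let ?m = "\<lambda>k. integral\<^sup>L ?P (\<lambda>y. sorted_entry n y k)"
  have "var_sorted n = (\<Sum>k<n. integral\<^sup>L ?P (\<lambda>x. (sorted_entry n x k - ?m k)^2))"
    unfolding var_sorted_def
    by (rule Bochner_Integration.integral_sum) (intro sq_expand(1)[OF prob_gv int_S int_S2]; simp)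
  also have "\<dots> \<le> (\<Sum>k<n. integral\<^sup>L ?P (\<lambda>x. (sorted_entry n x k - c k)^2))"
    by (intro sum_mono var_min[OF prob_gv int_S int_S2]) auto
  also have "\<dots> = integral\<^sup>L ?P (\<lambda>x. \<Sum>k<n. (sorted_entry n x k - c k)^2)"
    by (rule Bochner_Integration.integral_sum[symmetric]) (intro sq_expand(1)[OF prob_gv int_S int_S2]; simp)
  finally show ?thesis .
qed

lemma NN_UNIV[simp]: "measure NN UNIV = 1"
  using prob_space.prob_space[OF prob_NN] by simp

lemma NN_meas: "measurable NN M' = measurable borel M'"
  by (rule measurable_cong_sets) auto

lemma ind_meas[measurable]: "(\<lambda>y. if y \<le> t then 1 else 0::real) \<in> borel_measurable NN"
  unfolding NN_meas by measurable

definition FF :: "real \<Rightarrow> real" where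
  "FF t = integral\<^sup>L NN (\<lambda>y. if y \<le> t then 1 else 0)"

lemma FF_bounds: "0 \<le> FF t" "FF t \<le> 1"
proof -
  interpret prob_space NN by (rule prob_NN)
  have i: "integrable NN (\<lambda>y. if y \<le> t then 1 else 0 :: real)"
    by (rule integrable_const_bound[where B=1]) auto
  show "0 \<le> FF t" unfolding FF_def by (rule integral_nonneg_AE) auto
  have "FF t \<le> integral\<^sup>L NN (\<lambda>y. 1)" unfolding FF_def by (rule integral_mono[OF i]) auto
  then show "FF t \<le> 1" by simp
qed

lemma FF_mono: "s \<le> t \<Longrightarrow> FF s \<le> FF t"
proof -
  assume st: "s \<le> t"
  interpret prob_space NN by (rule prob_NN)
  have i: "integrable NN (\<lambda>y. if y \<le> t then 1 else 0 :: real)" for t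
    by (rule integrable_const_bound[where B=1]) auto
  show ?thesis unfolding FF_def by (rule integral_mono[OF i i]) (use st in auto)
qed

definition uu :: "real \<Rightarrow> real \<Rightarrow> real" where
  "uu t y = (if y \<le> t then 1 else 0) - FF t"

lemma uu_bound: "\<bar>uu t y\<bar> \<le> 1"
  using FF_bounds[of t] unfolding uu_def by auto

lemma uu_meas[measurable]: "uu t \<in> borel_measurable borel"
  unfolding uu_def by measurable

lemma uu_measNN[measurable]: "uu t \<in> borel_measurable NN"
  unfolding NN_meas by measurable

lemma uu_int: "integrable NN (uu t)"
proof -
  interpret prob_space NN by (rule prob_NN)
  show ?thesis by (rule integrable_const_bound[where B=1]) (auto simp: uu_bound)
qed

lemma uu_mean: "integral\<^sup>L NN (uu t) = 0"
proof -
  interpret prob_space NN by (rule prob_NN)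
  have i: "integrable NN (\<lambda>y. if y \<le> t then 1 else 0 :: real)"
    by (rule integrable_const_bound[where B=1]) auto
  show ?thesis unfolding uu_def
    by (subst Bochner_Integration.integral_diff[OF i]) (auto simp: FF_def)
qed

lemma Y_eq: "real (cnt n t x) - real n * FF t = (\<Sum>i<n. uu t (x i))"
  unfolding cnt_real uu_def by (simp add: sum_subtractf)

lemma int_uu2: "i < n \<Longrightarrow> j < n \<Longrightarrow> integrable (gauss_vec n) (\<lambda>x. uu t (x i) * uu t (x j))"
proof -
  assume ij: "i < n" "j < n"
  interpret prob_space "gauss_vec n" by (rule prob_gv)
  have [measurable]: "(\<lambda>x. x i) \<in> borel_measurable (gauss_vec n)" "(\<lambda>x. x j) \<in> borel_measurable (gauss_vec n)"
    using ij by (auto intro: meas_coord)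
  show ?thesis
  proof (rule integrable_const_bound[where B=1])
    show "AE x in gauss_vec n. norm (uu t (x i) * uu t (x j)) \<le> 1"
      using uu_bound[of t] by (intro AE_I2) (simp add: abs_mult mult_le_one)
  qed measurable
qed

lemma EY2: "integral\<^sup>L (gauss_vec n) (\<lambda>x. (\<Sum>i<n. uu t (x i))^2) \<le> real n"
proof -
  let ?P = "gauss_vec n"
  interpret prob_space ?P by (rule prob_gv)
  have e: "(\<lambda>x. (\<Sum>i<n. uu t (x i))^2) = (\<lambda>x. \<Sum>i<n. \<Sum>j<n. uu t (x i) * uu t (x j))"
    by (auto simp: power2_eq_square sum_product)
  have "integral\<^sup>L ?P (\<lambda>x. \<Sum>i<n. \<Sum>j<n. uu t (x i) * uu t (x j))
      = (\<Sum>i<n. integral\<^sup>L ?P (\<lambda>x. \<Sum>j<n. uu t (x i) * uu t (x j)))"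
    by (rule Bochner_Integration.integral_sum) (intro Bochner_Integration.integrable_sum int_uu2; simp)
  also have "\<dots> = (\<Sum>i<n. \<Sum>j<n. integral\<^sup>L ?P (\<lambda>x. uu t (x i) * uu t (x j)))"
    by (intro sum.cong refl Bochner_Integration.integral_sum int_uu2) auto
  also have "\<dots> \<le> (\<Sum>i<n. \<Sum>j<n. if i = j then 1 else 0)"
  proof (intro sum_mono)
    fix i j assume ij: "i \<in> {..<n}" "j \<in> {..<n}"
    show "integral\<^sup>L ?P (\<lambda>x. uu t (x i) * uu t (x j)) \<le> (if i = j then 1 else 0)"
    proof (cases "i = j")
      case True
      have uusq: "uu t y * uu t y \<le> 1" for y
        using uu_bound[of t y] mult_le_one[of "\<bar>uu t y\<bar>" "\<bar>uu t y\<bar>"] by (simp add: abs_mult_self_eq)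
      have "integral\<^sup>L ?P (\<lambda>x. uu t (x i) * uu t (x j)) \<le> integral\<^sup>L ?P (\<lambda>x. 1)"
        by (rule integral_mono[OF int_uu2]) (use ij uusq True in auto)
      then show ?thesis using True by (simp add: prob_space)
    next
      case False
      then show ?thesis using ij int_coord2[of i n j "uu t" "uu t"] uu_int uu_mean by simp
    qed
  qed
  also have "\<dots> = real n" by simp
  finally show ?thesis unfolding e .
qed

lemma EY_abs: "integral\<^sup>L (gauss_vec n) (\<lambda>x. \<bar>real (cnt n t x) - real n * FF t\<bar>) \<le> sqrt (real n)"
proof (cases "n = 0")
  case True
  then show ?thesis by (simp add: cnt_def)
next
  case False
  let ?P = "gauss_vec n"
  interpret prob_space ?P by (rule prob_gv)
  define a where "a = sqrt (real n)"
  have a: "a > 0" using False unfolding a_def by simp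
  have i2: "integrable ?P (\<lambda>x. (\<Sum>i<n. uu t (x i))^2)"
    unfolding power2_eq_square sum_product by (intro Bochner_Integration.integrable_sum int_uu2; simp)
  have "integral\<^sup>L ?P (\<lambda>x. \<bar>real (cnt n t x) - real n * FF t\<bar>)
      \<le> integral\<^sup>L ?P (\<lambda>x. (\<Sum>i<n. uu t (x i))^2 / (2*a) + a/2)"
  proof (rule integral_mono')
    show "integrable ?P (\<lambda>x. (\<Sum>i<n. uu t (x i))^2 / (2*a) + a/2)"
      using i2 by auto
    fix x
    have "0 \<le> (\<bar>\<Sum>i<n. uu t (x i)\<bar> - a)^2" by simp
    then have "2 * a * \<bar>\<Sum>i<n. uu t (x i)\<bar> \<le> (\<Sum>i<n. uu t (x i))^2 + a^2"
      by (simp add: power2_eq_square algebra_simps)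
    then have "\<bar>\<Sum>i<n. uu t (x i)\<bar> \<le> (\<Sum>i<n. uu t (x i))^2 / (2*a) + a/2"
      using a by (simp add: field_simps power2_eq_square)
    then show "\<bar>real (cnt n t x) - real n * FF t\<bar> \<le> (\<Sum>i<n. uu t (x i))^2 / (2*a) + a/2"
      by (simp add: Y_eq)
    show "0 \<le> (\<Sum>i<n. uu t (x i))^2 / (2*a) + a/2" using a by simp
  qed
  also have "\<dots> = integral\<^sup>L ?P (\<lambda>x. (\<Sum>i<n. uu t (x i))^2) / (2*a) + a/2"
    using i2 by (simp add: prob_space)
  also have "\<dots> \<le> real n / (2*a) + a/2"
    using EY2[of n t] a by (simp add: divide_right_mono)
  also have "real n / (2*a) + a/2 = a"
    using a unfolding a_def by (simp add: field_simps)
  finally show ?thesis unfolding a_def .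
qed

definition cl :: "real \<Rightarrow> real \<Rightarrow> real" where "cl M y = max (-M) (min M y)"

lemma cl_le: "-M \<le> t \<Longrightarrow> t < M \<Longrightarrow> (cl M s \<le> t) = (s \<le> t)"
  unfolding cl_def by auto

lemma cl_bnd: "M > 0 \<Longrightarrow> -M \<le> cl M s \<and> cl M s \<le> M"
  unfolding cl_def by auto

lemma cl_tail: assumes "M > 0" shows "(y - cl M y)^2 \<le> y^4 / M^2"
proof (cases "\<bar>y\<bar> \<le> M")
  case True
  then have "cl M y = y" unfolding cl_def by auto
  then show ?thesis by simp
next
  case False
  then have "\<bar>y - cl M y\<bar> \<le> \<bar>y\<bar>" unfolding cl_def using assms by auto
  then have "(y - cl M y)^2 \<le> y^2" by (simp add: abs_le_square_iff)
  also have "y^2 \<le> y^4 / M^2"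
  proof -
    have "\<bar>M\<bar> \<le> \<bar>y\<bar>" using False assms by simp
    then have "M^2 \<le> y^2" by (simp only: abs_le_square_iff)
    then have "y^2 * M^2 \<le> y^2 * y^2" by (rule mult_left_mono) simp
    moreover have "y^2 * y^2 = y^4" by (simp add: power2_eq_square power4_eq_xxxx mult.assoc)
    ultimately have "y^2 * M^2 \<le> y^4" by simp
    then show ?thesis using assms by (simp add: le_divide_eq)
  qed
  finally show ?thesis .
qed

lemma sq_sum_le: "((a::real) + b)^2 \<le> 2 * a^2 + 2 * b^2"
proof -
  have "0 \<le> (a - b)^2" by simp
  then show ?thesis by (simp add: power2_eq_square algebra_simps)
qed

lemma pointwise:
  fixes M h :: real and J n :: nat and C :: "nat \<Rightarrow> nat" and c :: "nat \<Rightarrow> real"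
  assumes M: "M > 0" and J: "J > 0" and h: "h = 2 * M / J"
    and cb: "\<And>k. -M \<le> c k \<and> c k \<le> M"
    and ciff: "\<And>j k. j < J \<Longrightarrow> (c k \<le> -M + real j * h) = (k < C j)"
    and Cn: "\<And>j. j < J \<Longrightarrow> C j \<le> n"
  shows "(\<Sum>k<n. (sorted_entry n x k - c k)^2)
     \<le> 4 * M * h * (real n + (\<Sum>j<J. \<bar>real (cnt n (-M + real j * h) x) - real (C j)\<bar>))
        + 2 * (\<Sum>i<n. (x i)^4) / M^2"
proof -
  let ?S = "\<lambda>k. sorted_entry n x k"
  let ?T = "\<lambda>k. cl M (sorted_entry n x k)"
  let ?t = "\<lambda>j. -M + real j * h"
  have hpos: "h > 0" using M J h by simp
  have tj: "-M \<le> ?t j \<and> ?t j < M" if "j < J" for j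
  proof -
    have "real j * h < real J * h" using that hpos by simp
    moreover have "real J * h = 2 * M" using h J by simp
    moreover have "0 \<le> real j * h" using hpos by simp
    ultimately show ?thesis by linarith
  qed
  have T_iff: "(?T k \<le> ?t j) = (k < cnt n (?t j) x)" if "k < n" "j < J" for k j
    using cl_le[of M "?t j" "?S k"] tj[OF that(2)] sorted_entry_le_iff[OF that(1)] by simp
  have step1: "(?T k - c k)^2 \<le> 2 * M * h * (1 + (\<Sum>j<J. \<bar>(if k < cnt n (?t j) x then 1 else 0) - (if k < C j then 1 else (0::real))\<bar>))"
    if k: "k < n" for k
  proof -
    have b1: "-M \<le> ?T k \<and> ?T k \<le> M" using cl_bnd[OF M] by blast
    have ab: "\<bar>?T k - c k\<bar> \<le> 2 * M" using b1 cb[of k] by auto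
    have "(?T k - c k)^2 \<le> 2 * M * \<bar>?T k - c k\<bar>"
      using mult_right_mono[OF ab abs_ge_zero[of "?T k - c k"]] by (simp add: power2_eq_square)
    also have "\<bar>?T k - c k\<bar> \<le> h * (1 + (\<Sum>j<J. \<bar>(if ?T k \<le> ?t j then 1 else 0) - (if c k \<le> ?t j then 1 else (0::real))\<bar>))"
      using grid[OF M J h, of "?T k" "c k"] b1 cb[of k] by simp
    also have "(\<Sum>j<J. \<bar>(if ?T k \<le> ?t j then 1 else 0) - (if c k \<le> ?t j then 1 else (0::real))\<bar>)
        = (\<Sum>j<J. \<bar>(if k < cnt n (?t j) x then 1 else 0) - (if k < C j then 1 else (0::real))\<bar>)"
    proof (intro sum.cong refl)
      fix j assume "j \<in> {..<J}"
      then have j: "j < J" by simp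
      show "\<bar>(if ?T k \<le> ?t j then 1 else 0) - (if c k \<le> ?t j then 1 else (0::real))\<bar>
        = \<bar>(if k < cnt n (?t j) x then 1 else 0) - (if k < C j then 1 else (0::real))\<bar>"
        by (simp only: T_iff[OF k j] ciff[OF j])
    qed
    finally show ?thesis using M by (simp add: mult_left_mono mult.assoc)
  qed
  have sumT: "(\<Sum>k<n. (?T k - c k)^2) \<le> 2 * M * h * (real n + (\<Sum>j<J. \<bar>real (cnt n (?t j) x) - real (C j)\<bar>))"
  proof -
    let ?A = "\<lambda>k j. \<bar>(if k < cnt n (?t j) x then 1 else 0) - (if k < C j then 1 else (0::real))\<bar>"
    have "(\<Sum>k<n. (?T k - c k)^2) \<le> (\<Sum>k<n. 2 * M * h * (1 + (\<Sum>j<J. \<bar>(if k < cnt n (?t j) x then 1 else 0) - (if k < C j then 1 else (0::real))\<bar>)))"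
      by (intro sum_mono step1) simp
    also have "\<dots> = 2 * M * h * (\<Sum>k<n. (1 + (\<Sum>j<J. ?A k j)))"
      by (rule sum_distrib_left[symmetric])
    also have "(\<Sum>k<n. (1 + (\<Sum>j<J. ?A k j))) = real n + (\<Sum>k<n. \<Sum>j<J. ?A k j)"
      by (simp add: sum.distrib)
    also have "(\<Sum>k<n. \<Sum>j<J. ?A k j) = (\<Sum>j<J. \<Sum>k<n. ?A k j)"
      by (rule sum.swap)
    also have "(\<Sum>j<J. \<Sum>k<n. \<bar>(if k < cnt n (?t j) x then 1 else 0) - (if k < C j then 1 else (0::real))\<bar>)
        = (\<Sum>j<J. \<bar>real (cnt n (?t j) x) - real (C j)\<bar>)"
      by (intro sum.cong refl sum_ind_diff cnt_le Cn) simp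
    finally show ?thesis .
  qed
  have sumST: "(\<Sum>k<n. (?S k - ?T k)^2) \<le> (\<Sum>i<n. (x i)^4) / M^2"
  proof -
    have "(\<Sum>k<n. (?S k - ?T k)^2) = (\<Sum>i<n. (x i - cl M (x i))^2)"
      by (rule sum_sorted_entry[of "\<lambda>y. (y - cl M y)^2"])
    also have "\<dots> \<le> (\<Sum>i<n. (x i)^4 / M^2)" by (intro sum_mono cl_tail M)
    also have "\<dots> = (\<Sum>i<n. (x i)^4) / M^2" by (simp add: sum_divide_distrib)
    finally show ?thesis .
  qed
  have "(\<Sum>k<n. (?S k - c k)^2) \<le> (\<Sum>k<n. 2 * (?T k - c k)^2 + 2 * (?S k - ?T k)^2)"
    by (intro sum_mono) (use sq_sum_le[of "?T k - c k" "?S k - ?T k" for k] in simp)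
  also have "\<dots> = 2 * (\<Sum>k<n. (?T k - c k)^2) + 2 * (\<Sum>k<n. (?S k - ?T k)^2)"
    by (simp add: sum.distrib sum_distrib_left)
  also have "\<dots> \<le> 2 * (2 * M * h * (real n + (\<Sum>j<J. \<bar>real (cnt n (?t j) x) - real (C j)\<bar>))) + 2 * ((\<Sum>i<n. (x i)^4) / M^2)"
    using sumT sumST by linarith
  finally show ?thesis by simp
qed

lemma int_absY: "integrable (gauss_vec n) (\<lambda>x. \<bar>real (cnt n t x) - real n * FF t\<bar>)"
proof -
  interpret prob_space "gauss_vec n" by (rule prob_gv)
  show ?thesis
  proof (rule integrable_const_bound[where B="real n + real n"])
    show "AE x in gauss_vec n. norm \<bar>real (cnt n t x) - real n * FF t\<bar> \<le> real n + real n"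
    proof (intro AE_I2)
      fix x
      have "real (cnt n t x) \<le> real n" using cnt_le[of n t x] by simp
      moreover have "0 \<le> real n * FF t" "real n * FF t \<le> real n"
        using FF_bounds[of t] by (auto simp: mult_left_le)
      ultimately show "norm \<bar>real (cnt n t x) - real n * FF t\<bar> \<le> real n + real n" by auto
    qed
  qed measurable
qed

lemma int_x4: "integral\<^sup>L (gauss_vec n) (\<lambda>x. \<Sum>i<n. (x i)^4) = 3 * real n"
proof -
  have "integral\<^sup>L (gauss_vec n) (\<lambda>x. \<Sum>i<n. (x i)^4) = (\<Sum>i<n. integral\<^sup>L (gauss_vec n) (\<lambda>x. (x i)^4))"
    by (rule Bochner_Integration.integral_sum) (auto intro: int_coord1 int_NN_pow)
  also have "\<dots> = (\<Sum>i<n. 3)"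
    by (intro sum.cong refl) (simp add: int_coord1(2)[OF _ int_NN_pow] int_NN_4)
  finally show ?thesis by simp
qed

lemma main_bound:
  fixes M :: real and J n :: nat
  assumes M: "M > 0" and J: "J > 0"
  shows "var_sorted n \<le> 8 * M^2 * real n / real J + 8 * M^2 * (sqrt (real n) + 1) + 6 * real n / M^2"
proof -
  let ?P = "gauss_vec n"
  interpret prob_space ?P by (rule prob_gv)
  define h where "h = 2 * M / real J"
  have hpos: "h > 0" using M J unfolding h_def by simp
  have Jh: "real J * h = 2 * M" using J unfolding h_def by simp
  define t where "t j = -M + real j * h" for j
  define C where "C j = nat \<lfloor>real n * FF (t j)\<rfloor>" for j
  have Cmono: "C j1 \<le> C j2" if "j1 \<le> j2" for j1 j2
  proof -
    have "t j1 \<le> t j2" unfolding t_def using that hpos by (simp add: mult_right_mono)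
    then have "FF (t j1) \<le> FF (t j2)" by (rule FF_mono)
    then have "real n * FF (t j1) \<le> real n * FF (t j2)" by (simp add: mult_left_mono)
    then show ?thesis unfolding C_def by (intro nat_mono floor_mono)
  qed
  have nF: "0 \<le> real n * FF (t j)" "real n * FF (t j) \<le> real n" for j
    using FF_bounds[of "t j"] by (auto simp: mult_left_le)
  have Cn: "C j \<le> n" for j
  proof -
    have "\<lfloor>real n * FF (t j)\<rfloor> \<le> int n" using nF[of j] by (simp add: floor_le_iff)
    then show ?thesis unfolding C_def by simp
  qed
  have Cclose: "\<bar>real (C j) - real n * FF (t j)\<bar> \<le> 1" for j
  proof -
    have "real (C j) = of_int \<lfloor>real n * FF (t j)\<rfloor>" unfolding C_def using nF[of j] by simp
    then show ?thesis using of_int_floor_le[of "real n * FF (t j)"] real_of_int_floor_gt_diff_one[of "real n * FF (t j)"]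
      by linarith
  qed
  have "\<exists>c. (\<forall>k. -M \<le> c k \<and> c k \<le> M) \<and> (\<forall>j<J. \<forall>k. (c k \<le> -M + real j * h) = (k < C j))"
    by (rule exists_c[OF hpos Jh]) (rule Cmono)
  then obtain c where cb0: "\<forall>k. -M \<le> c k \<and> c k \<le> M"
    and ciff0: "\<forall>j<J. \<forall>k. (c k \<le> -M + real j * h) = (k < C j)"
    by blast
  have cb: "\<And>k. -M \<le> c k \<and> c k \<le> M" using cb0 by blast
  have ciff: "\<And>j k. j < J \<Longrightarrow> (c k \<le> -M + real j * h) = (k < C j)" using ciff0 by blast
  define K where "K = 4 * M * h * (real n + real J)"
  define SJ where "SJ x = (\<Sum>j<J. 4 * M * h * \<bar>real (cnt n (t j) x) - real n * FF (t j)\<bar>)" for x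
  define X4 where "X4 x = (2 / M^2) * (\<Sum>i<n. (x i)^4)" for x
  define B where "B x = K + SJ x + X4 x" for x
  have ptw: "(\<Sum>k<n. (sorted_entry n x k - c k)^2) \<le> B x" for x
  proof -
    have "(\<Sum>k<n. (sorted_entry n x k - c k)^2)
      \<le> 4 * M * h * (real n + (\<Sum>j<J. \<bar>real (cnt n (t j) x) - real (C j)\<bar>)) + 2 * (\<Sum>i<n. (x i)^4) / M^2"
      using pointwise[OF M J h_def cb ciff Cn] unfolding t_def by blast
    also have "(\<Sum>j<J. \<bar>real (cnt n (t j) x) - real (C j)\<bar>) \<le> (\<Sum>j<J. \<bar>real (cnt n (t j) x) - real n * FF (t j)\<bar> + 1)"
      by (intro sum_mono) (use Cclose in \<open>smt (verit)\<close>)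
    finally have "(\<Sum>k<n. (sorted_entry n x k - c k)^2)
      \<le> 4 * M * h * (real n + (\<Sum>j<J. \<bar>real (cnt n (t j) x) - real n * FF (t j)\<bar> + 1)) + 2 * (\<Sum>i<n. (x i)^4) / M^2"
      using M hpos by (simp add: mult_left_mono)
    also have "\<dots> = B x" unfolding B_def K_def SJ_def X4_def
      by (simp add: sum.distrib sum_distrib_left sum_divide_distrib algebra_simps)
    finally show ?thesis .
  qed
  have Bnn: "0 \<le> B x" for x
    unfolding B_def K_def SJ_def X4_def using M hpos by (intro add_nonneg_nonneg sum_nonneg mult_nonneg_nonneg) auto
  have int4: "integrable ?P (\<lambda>x. \<Sum>i<n. (x i)^4)" by (rule int_sum_pow)
  have iSJ: "integrable ?P SJ" unfolding SJ_def
    by (intro Bochner_Integration.integrable_sum Bochner_Integration.integrable_mult_right int_absY)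
  have iX4: "integrable ?P X4" unfolding X4_def
    by (intro Bochner_Integration.integrable_mult_right int4)
  have iK: "integrable ?P (\<lambda>x. K + SJ x)"
    by (intro Bochner_Integration.integrable_add integrable_const iSJ)
  have intB: "integrable ?P B" unfolding B_def
    by (intro Bochner_Integration.integrable_add integrable_const iSJ iX4)
  have IB1: "integral\<^sup>L ?P B = integral\<^sup>L ?P (\<lambda>x. K + SJ x) + integral\<^sup>L ?P X4"
    unfolding B_def by (rule Bochner_Integration.integral_add[OF iK iX4])
  have IB2: "integral\<^sup>L ?P (\<lambda>x. K + SJ x) = K + integral\<^sup>L ?P SJ"
    by (subst Bochner_Integration.integral_add[OF integrable_const iSJ]) (simp add: prob_space)
  have IB3: "integral\<^sup>L ?P SJ = (\<Sum>j<J. 4 * M * h * integral\<^sup>L ?P (\<lambda>x. \<bar>real (cnt n (t j) x) - real n * FF (t j)\<bar>))"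
    unfolding SJ_def
    by (subst Bochner_Integration.integral_sum) (auto intro: int_absY)
  have IB4: "integral\<^sup>L ?P X4 = (2 / M^2) * (3 * real n)"
    unfolding X4_def by (simp add: int_x4)
  have IBle: "integral\<^sup>L ?P SJ \<le> (\<Sum>j<J. 4 * M * h * sqrt (real n))"
    unfolding IB3 using M hpos by (intro sum_mono mult_left_mono EY_abs) auto
  have fin: "K + (\<Sum>j<J. 4 * M * h * sqrt (real n)) + (2 / M^2) * (3 * real n)
     = 8 * M^2 * real n / real J + 8 * M^2 * (sqrt (real n) + 1) + 6 * real n / M^2"
    unfolding K_def h_def using J M by (simp add: field_simps power2_eq_square)
  have "var_sorted n \<le> integral\<^sup>L ?P (\<lambda>x. \<Sum>k<n. (sorted_entry n x k - c k)^2)" by (rule var_le)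
  also have "\<dots> \<le> integral\<^sup>L ?P B" by (rule integral_mono'[OF intB ptw Bnn])
  also have "\<dots> = K + integral\<^sup>L ?P SJ + (2 / M^2) * (3 * real n)"
    unfolding IB1 IB2 IB4 ..
  also have "\<dots> \<le> K + (\<Sum>j<J. 4 * M * h * sqrt (real n)) + (2 / M^2) * (3 * real n)"
    using IBle by linarith
  also have "\<dots> = 8 * M^2 * real n / real J + 8 * M^2 * (sqrt (real n) + 1) + 6 * real n / M^2"
    by (rule fin)
  finally show ?thesis .
qed

lemma var_nonneg: "0 \<le> var_sorted n"
  unfolding var_sorted_def by (intro integral_nonneg_AE AE_I2 sum_nonneg) auto

theorem theorem6:
  shows "(\<lambda>n. var_sorted n / real n) \<longlonglongrightarrow> 0"
proof (rule tendstoI)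
  fix e :: real assume e: "e > 0"
  define M where "M = sqrt (24 / e)"
  have M: "M > 0" using e unfolding M_def by simp
  have M2: "M^2 = 24 / e" using e unfolding M_def by simp
  define J where "J = nat \<lceil>32 * M^2 / e\<rceil> + 1"
  have J: "J > 0" unfolding J_def by simp
  have "32 * M^2 / e < real J" unfolding J_def by linarith
  then have t1: "8 * M^2 / real J < e / 4" using e J by (simp add: field_simps)
  have t3: "6 / M^2 = e / 4" unfolding M2 using e by (simp add: field_simps)
  have lim: "(\<lambda>n. 8 * M^2 * (sqrt (real n) + 1) / real n) \<longlonglongrightarrow> 0" by real_asymp
  have ev: "eventually (\<lambda>n. 8 * M^2 * (sqrt (real n) + 1) / real n < e / 4) sequentially"
    by (rule order_tendstoD(2)[OF lim]) (use e in simp)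
  show "eventually (\<lambda>n. dist (var_sorted n / real n) 0 < e) sequentially"
    using ev eventually_gt_at_top[of 0]
  proof eventually_elim
    case (elim n)
    then have n: "real n > 0" by simp
    have b: "var_sorted n \<le> 8 * M^2 * real n / real J + 8 * M^2 * (sqrt (real n) + 1) + 6 * real n / M^2"
      by (rule main_bound[OF M J])
    have "var_sorted n / real n \<le> (8 * M^2 * real n / real J + 8 * M^2 * (sqrt (real n) + 1) + 6 * real n / M^2) / real n"
      using b n by (simp add: divide_right_mono)
    also have "\<dots> = 8 * M^2 / real J + 8 * M^2 * (sqrt (real n) + 1) / real n + 6 / M^2"
      using n by (simp add: field_simps)
    finally have "var_sorted n / real n < e" using t1 t3 elim(1) e by linarith
    moreover have "0 \<le> var_sorted n / real n" using var_nonneg n by simp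
    ultimately show ?case by simp
  qed
qed

end
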